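(* Let $n\ge7$ and let $\mathcal{W}\subset(\mathbb{R}^{4n})^{\otimes5}$ be the set defined below, with $E=\{1,\dots,2n\}$ and $\mathcal{E}=\{2n+1,\dots,4n\}$. Then $\mathbb{I}(E,6)$ is the only decomposable tensor in $\mathbb{I}(E,6)\bmod\mathcal{W}_E$, and $\mathbb{I}(\mathcal{E},6)$ is the only decomposable tensor in $\mathbb{I}(\mathcal{E},6)\bmod\mathcal{W}_{\mathcal{E}}$.
   Context: All tensors are real; decomposable means of the form $v_1\otimes\cdots\otimes v_6$. $\mathbb{I}(E,6)\in(\mathbb{R}^E)^{\otimes6}$ is the all-ones tensor, similarly $\mathbb{I}(\mathcal{E},6)$. $\mathcal{W}_E$ (resp. $\mathcal{W}_{\mathcal{E}}$) is the set of restrictions of the tensors in $\mathcal{W}$ to indices in $E$ (resp. $\mathcal{E}$). For $\mathcal{C}\in(\mathbb{R}^I)^{\otimes d}$ and a finite $\mathcal{V}\subset(\mathbb{R}^I)^{\otimes(d-1)}$, $\mathcal{C}\bmod\mathcal{V}$ is the set of tensors with entries $\mathcal{C}(k_1|\dots|k_d)+\sum_{j=1}^dM_j^{(k_j)}(k_1|\dots|\widehat{k_j}|\dots|k_d)$ with arbitrary $M_j^{(k_j)}\in\operatorname{Span}\mathcal{V}$ chosen independently for each $j$ and each $k_j\in I$. The set $\mathcal{W}$: for $i\in\{1,\dots,n\}$ let $\alpha_i\in\mathbb{R}^{2n}$ have entries $1$ at positions $2i-1,2i$ and $0$ elsewhere; $(a|b)\in\mathbb{R}^{4n}$ is concatenation.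 With $1\le i_1<i_2<i_3<i_4\le n$ and $1\le k_1<k_2\le n$ ranging over all choices, let $U$ be the set of vectors of the 16 types: $(\alpha_{i_1}+\alpha_{i_2}+\alpha_{i_3}+\alpha_{i_4}|0)$, $(\alpha_{i_1}+\alpha_{i_2}+\alpha_{i_3}|0)$, $(\alpha_{i_1}+\alpha_{i_2}|0)$, $(\alpha_{i_1}|0)$, $(\alpha_{i_1}+\alpha_{i_2}+\alpha_{i_3}+\alpha_{i_4}|\alpha_{k_1})$, $(\alpha_{i_1}+\alpha_{i_2}|\tfrac{(n-2)^2}{(n-3)(n-1)}\alpha_{k_1})$, $(\alpha_{i_1}|\tfrac{n-2}{n-3}\alpha_{k_1})$, $(\alpha_{i_1}|\tfrac{n-1}{n-4}\alpha_{k_1})$, $(\alpha_{i_1}+\alpha_{i_2}+\alpha_{i_3}|\alpha_{k_1}+\alpha_{k_2})$, $(\alpha_{i_1}+\alpha_{i_2}|\tfrac{n-2}{n-3}(\alpha_{k_1}+\alpha_{k_2}))$, $(\alpha_{i_1}+\alpha_{i_2}|\tfrac{n-2}{n-4}\alpha_{k_1})$, $(0|\alpha_{k_1})$, $(\alpha_{i_1}+\alpha_{i_2}+\alpha_{i_3}|\tfrac{n-3}{n-4}\alpha_{k_1})$, $(\alpha_{i_1}+\alpha_{i_2}+\alpha_{i_3}|\tfrac{n-2}{n-1}\alpha_{k_1})$, $(\alpha_{i_1}|\tfrac{n-1}{n-3}(\alpha_{k_1}+\alpha_{k_2}))$, $(0|\alpha_{k_1}+\alpha_{k_2})$ (types with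 only $i_1$ or only $k_1$ omit the other indices; $k_1$ alone ranges over $\{1,\dots,n\}$). Let $\pi(a_1,\dots,a_{2n},b_1,\dots,b_{2n})=(b_2,\dots,b_{2n},b_1,a_2,\dots,a_{2n},a_1)$. Set $\mathcal{W}_1=\{u^{\otimes5}:u\in U\}$, $\mathcal{W}_2=\{(\pi u)^{\otimes5}:u\in U\}$, $\mathcal{W}=\mathcal{W}_1\cup\mathcal{W}_2$. *)

theory Defs
  imports Complex_Main
begin

text \<open>Vectors in R^m are functions nat \<Rightarrow> real, meaningful on positions 1..m.
Tensors of order d over an index set I are functions nat list \<Rightarrow> real, meaningful on
lists of length d with all entries in I (the domain tdom I d).\<close>

definition tdom :: "nat set \<Rightarrow> nat \<Rightarrow> nat list set" where
  "tdom I d = {ks. length ks = d \<and> set ks \<subseteq> I}"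

definition tpow :: "(nat \<Rightarrow> real) \<Rightarrow> nat list \<Rightarrow> real" where
  "tpow u ks = prod_list (map u ks)"

definition ones_tensor :: "nat list \<Rightarrow> real" where
  "ones_tensor ks = 1"

definition decomposable :: "nat set \<Rightarrow> nat \<Rightarrow> (nat list \<Rightarrow> real) \<Rightarrow> bool" where
  "decomposable I d T \<longleftrightarrow>
     (\<exists>v :: nat \<Rightarrow> nat \<Rightarrow> real. \<forall>ks\<in>tdom I d. T ks = (\<Prod>j<d. v j (ks ! j)))"

definition in_span_on :: "(nat list \<Rightarrow> real) set \<Rightarrow> nat set \<Rightarrow> nat \<Rightarrow> (nat list \<Rightarrow> real) \<Rightarrow> bool" where
  "in_span_on V I e M \<longleftrightarrow>
     (\<exists>c :: (nat list \<Rightarrow> real) \<Rightarrow> real. \<forall>ks\<in>tdom I e. M ks = (\<Sum>v\<in>V. c v * v ks))"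

definition remove_at :: "nat \<Rightarrow> nat list \<Rightarrow> nat list" where
  "remove_at j ks = take j ks @ drop (Suc j) ks"

definition mod_set :: "(nat list \<Rightarrow> real) \<Rightarrow> (nat list \<Rightarrow> real) set \<Rightarrow> nat set \<Rightarrow> nat
                       \<Rightarrow> (nat list \<Rightarrow> real) set" where
  "mod_set C V I d = {T. \<exists>M :: nat \<Rightarrow> nat \<Rightarrow> nat list \<Rightarrow> real.
       (\<forall>j<d. \<forall>k\<in>I. in_span_on V I (d - 1) (M j k)) \<and>
       (\<forall>ks\<in>tdom I d. T ks = C ks + (\<Sum>j<d. M j (ks ! j) (remove_at j ks)))}"

definition only_decomposable :: "(nat list \<Rightarrow> real) \<Rightarrow> (nat list \<Rightarrow> real) set \<Rightarrow> nat set \<Rightarrow> nat \<Rightarrow> bool" where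
  "only_decomposable C V I d \<longleftrightarrow>
     C \<in> mod_set C V I d \<and> decomposable I d C \<and>
     (\<forall>T\<in>mod_set C V I d. decomposable I d T \<longrightarrow> (\<forall>ks\<in>tdom I d. T ks = C ks))"

definition alpha :: "nat \<Rightarrow> nat \<Rightarrow> real" where
  "alpha i p = (if p = 2*i - 1 \<or> p = 2*i then 1 else 0)"

definition asum :: "nat set \<Rightarrow> nat \<Rightarrow> real" where
  "asum A p = (\<Sum>i\<in>A. alpha i p)"

definition vcat :: "nat \<Rightarrow> (nat \<Rightarrow> real) \<Rightarrow> (nat \<Rightarrow> real) \<Rightarrow> nat \<Rightarrow> real" where
  "vcat n a b p = (if p \<le> 2*n then a p else b (p - 2*n))"

definition utype :: "nat \<Rightarrow> nat \<Rightarrow> nat \<Rightarrow> real \<Rightarrow> (nat \<Rightarrow> real) set" where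
  "utype n a b c = {vcat n (asum A) (\<lambda>p. c * asum K p) | A K.
       A \<subseteq> {1..n} \<and> card A = a \<and> K \<subseteq> {1..n} \<and> card K = b}"

definition Uset :: "nat \<Rightarrow> (nat \<Rightarrow> real) set" where
  "Uset n = (let r = real n in
      utype n 4 0 1 \<union> utype n 3 0 1 \<union> utype n 2 0 1 \<union> utype n 1 0 1 \<union>
      utype n 4 1 1 \<union>
      utype n 2 1 ((r-2)^2 / ((r-3)*(r-1))) \<union>
      utype n 1 1 ((r-2)/(r-3)) \<union>
      utype n 1 1 ((r-1)/(r-4)) \<union>
      utype n 3 2 1 \<union>
      utype n 2 2 ((r-2)/(r-3)) \<union>
      utype n 2 1 ((r-2)/(r-4)) \<union>
      utype n 0 1 1 \<union>
      utype n 3 1 ((r-3)/(r-4)) \<union>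
      utype n 3 1 ((r-2)/(r-1)) \<union>
      utype n 1 2 ((r-1)/(r-3)) \<union>
      utype n 0 2 1)"

text \<open>pi(a_1..a_{2n}, b_1..b_{2n}) = (b_2,...,b_{2n},b_1,a_2,...,a_{2n},a_1), with
  a_p = w p and b_p = w (2n+p).\<close>
definition piv :: "nat \<Rightarrow> (nat \<Rightarrow> real) \<Rightarrow> nat \<Rightarrow> real" where
  "piv n w q = (if q < 2*n then w (2*n + q + 1)
                else if q = 2*n then w (2*n + 1)
                else if q < 4*n then w (q - 2*n + 1)
                else w 1)"

definition Wset :: "nat \<Rightarrow> (nat list \<Rightarrow> real) set" where
  "Wset n = (tpow ` Uset n) \<union> ((\<lambda>u. tpow (piv n u)) ` Uset n)"

end

theory Submission
  imports Defs "HOL-Library.Multiset"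
begin

lemma remove_at_tdom:
  assumes "ks \<in> tdom I 6" "j < 6"
  shows "remove_at j ks \<in> tdom I 5"
proof -
  have "set (remove_at j ks) \<subseteq> set ks"
    unfolding remove_at_def using set_take_subset set_drop_subset by fastforce
  then show ?thesis using assms unfolding tdom_def remove_at_def by auto
qed

lemma tdom_nth: "ks \<in> tdom I d \<Longrightarrow> j < d \<Longrightarrow> ks ! j \<in> I"
  unfolding tdom_def using nth_mem by blast

lemma abstract_main:
  fixes lo hi :: nat and V :: "(nat list \<Rightarrow> real) set" and G :: "nat list set"
  assumes lohi: "lo \<le> hi"
    and G_sub: "G \<subseteq> tdom {lo..hi} 6"
    and G_ne: "G \<noteq> {}"
    and vanish: "\<And>ks j w. ks \<in> G \<Longrightarrow> j < 6 \<Longrightarrow> w \<in> V \<Longrightarrow> w (remove_at j ks) = 0"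
    and step: "\<And>i x. i < 6 \<Longrightarrow> lo \<le> x \<Longrightarrow> x < hi \<Longrightarrow>
                  \<exists>ks\<in>G. ks ! i = x \<and> ks[i := x+1] \<in> G"
  shows "only_decomposable ones_tensor V {lo..hi} 6"
proof -
  let ?I = "{lo..hi}"
  have span0: "in_span_on V ?I 5 (\<lambda>_. 0)"
    unfolding in_span_on_def by (rule exI[of _ "\<lambda>_. 0"]) simp
  have mem: "ones_tensor \<in> mod_set ones_tensor V ?I 6"
    unfolding mod_set_def using span0
    by (intro CollectI exI[of _ "\<lambda>_ _ _. 0"]) simp
  have dec: "decomposable ?I 6 ones_tensor"
    unfolding decomposable_def ones_tensor_def
    by (rule exI[of _ "\<lambda>_ _. 1"]) simp
  have uniq: "\<forall>ks\<in>tdom ?I 6. T ks = ones_tensor ks"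
    if T: "T \<in> mod_set ones_tensor V ?I 6" and D: "decomposable ?I 6 T" for T
  proof -
    obtain M where Msp: "\<forall>j<6. \<forall>k\<in>?I. in_span_on V ?I 5 (M j k)"
      and TM: "\<forall>ks\<in>tdom ?I 6. T ks = ones_tensor ks + (\<Sum>j<6. M j (ks ! j) (remove_at j ks))"
      using T unfolding mod_set_def by auto
    obtain v where Tv: "\<forall>ks\<in>tdom ?I 6. T ks = (\<Prod>j<6. v j (ks ! j))"
      using D unfolding decomposable_def by auto
    have Gone: "(\<Prod>j<6. v j (ks ! j)) = 1" if ks: "ks \<in> G" for ks
    proof -
      have ksd: "ks \<in> tdom ?I 6" using ks G_sub by auto
      have "M j (ks ! j) (remove_at j ks) = 0" if j: "j < 6" for j
      proof -
        have "ks ! j \<in> ?I" using ksd j by (rule tdom_nth)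
        then obtain c where c: "\<forall>xs\<in>tdom ?I 5. M j (ks ! j) xs = (\<Sum>w\<in>V. c w * w xs)"
          using Msp j unfolding in_span_on_def by blast
        have "remove_at j ks \<in> tdom ?I 5" using remove_at_tdom ksd j by blast
        then have "M j (ks ! j) (remove_at j ks) = (\<Sum>w\<in>V. c w * w (remove_at j ks))" using c by blast
        also have "\<dots> = 0" using vanish[OF ks j] by (intro sum.neutral) simp
        finally show ?thesis .
      qed
      then have "T ks = 1" using TM ksd unfolding ones_tensor_def by simp
      then show ?thesis using Tv ksd by simp
    qed
    have split: "(\<Prod>j<6. v j (ks ! j)) = v i (ks ! i) * (\<Prod>j\<in>{..<6} - {i}. v j (ks ! j))"
      if "i < 6" for ks i using that by (simp add: prod.remove)
    have adj: "v i x = v i (x+1)" if i: "i < 6" and x: "lo \<le> x" "x < hi" for i x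
    proof -
      obtain ks where ks: "ks \<in> G" "ks ! i = x" "ks[i := x+1] \<in> G" using step[OF i x] by blast
      have len: "length ks = 6" using ks(1) G_sub unfolding tdom_def by auto
      have eq: "(\<Prod>j\<in>{..<6} - {i}. v j (ks[i := x+1] ! j)) = (\<Prod>j\<in>{..<6} - {i}. v j (ks ! j))"
        by (rule prod.cong) auto
      have "v i x * (\<Prod>j\<in>{..<6} - {i}. v j (ks ! j)) = 1"
        using Gone[OF ks(1)] split[OF i, of ks] ks(2) by simp
      moreover have "v i (x+1) * (\<Prod>j\<in>{..<6} - {i}. v j (ks ! j)) = 1"
        using Gone[OF ks(3)] split[OF i, of "ks[i := x+1]"] eq len i by simp
      ultimately show ?thesis by (metis mult_cancel_right mult_zero_left zero_neq_one)
    qed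
    have const: "v i (lo + k) = v i lo" if "i < 6" "lo + k \<le> hi" for i k
      using that
    proof (induction k)
      case 0 then show ?case by simp
    next
      case (Suc k)
      then have "v i (lo + k) = v i (lo + k + 1)" by (intro adj) auto
      then show ?case using Suc by simp
    qed
    have constI: "v i x = v i lo" if "i < 6" "x \<in> ?I" for i x
      using const[OF that(1), of "x - lo"] that(2) by simp
    have allP: "(\<Prod>j<6. v j (ks ! j)) = (\<Prod>j<6. v j lo)" if "ks \<in> tdom ?I 6" for ks
      proof (rule prod.cong)
      fix j assume "j \<in> {..<6::nat}"
      then have "ks ! j \<in> ?I" using tdom_nth[OF that] by simp
      moreover have "j < 6" using \<open>j \<in> {..<6}\<close> by simp
      ultimately show "v j (ks ! j) = v j lo" by (intro constI)
    qed simp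
    obtain g where g: "g \<in> G" using G_ne by blast
    have one: "(\<Prod>j<6. v j lo) = 1" using Gone[OF g] allP[of g] g G_sub by auto
    show ?thesis
    proof
      fix ks assume "ks \<in> tdom ?I 6"
      then show "T ks = ones_tensor ks" using Tv allP[of ks] one unfolding ones_tensor_def by simp
    qed
  qed
  show ?thesis unfolding only_decomposable_def using mem dec uniq by blast
qed

definition ab :: "nat \<Rightarrow> nat" where "ab p = (p + 1) div 2"
definition sb :: "nat \<Rightarrow> nat \<Rightarrow> nat" where "sb n p = ab (if p < 2*n then p+1 else 1)"

lemma alpha_nz: "alpha i p \<noteq> 0 \<Longrightarrow> 1 \<le> i \<Longrightarrow> ab p = i"
  unfolding alpha_def ab_def by (auto split: if_splits)

lemma asum_nz: "A \<subseteq> {1..n} \<Longrightarrow> asum A p \<noteq> 0 \<Longrightarrow> ab p \<in> A"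
proof -
  assume A: "A \<subseteq> {1..n}" and nz: "asum A p \<noteq> 0"
  then obtain i where "i \<in> A" "alpha i p \<noteq> 0" unfolding asum_def
    by (metis (mono_tags, lifting) sum.neutral)
  then show ?thesis using A alpha_nz by fastforce
qed

definition Sgood :: "nat \<Rightarrow> (nat \<Rightarrow> real) set" where
  "Sgood n = {vcat n (asum A) (\<lambda>p. c * asum K p) | c A K.
      A \<subseteq> {1..n} \<and> card A \<le> 4 \<and> K \<subseteq> {1..n} \<and> card K \<le> 2}"

lemma utype_sub: "a \<le> 4 \<Longrightarrow> b \<le> 2 \<Longrightarrow> utype n a b c \<subseteq> Sgood n"
  unfolding utype_def Sgood_def by blast

lemma Uset_sub: "Uset n \<subseteq> Sgood n"
  unfolding Uset_def Let_def
  by (intro Un_least; rule utype_sub; simp)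

lemma Uset_cases:
  assumes "u \<in> Uset n"
  shows "\<exists>c A K. A \<subseteq> {1..n} \<and> card A \<le> 4 \<and> K \<subseteq> {1..n} \<and> card K \<le> 2 \<and>
           u = vcat n (asum A) (\<lambda>p. c * asum K p)"
proof -
  have "u \<in> Sgood n" using Uset_sub assms by blast
  then obtain c A K where "u = vcat n (asum A) (\<lambda>p. c * asum K p)"
      "A \<subseteq> {1..n}" "card A \<le> 4" "K \<subseteq> {1..n}" "card K \<le> 2"
    unfolding Sgood_def mem_Collect_eq by blast
  then show ?thesis by blast
qed

lemma pigeon:
  fixes f :: "nat \<Rightarrow> real"
  assumes "finite A" "card A < length xs" "distinct (map g xs)"
    "\<forall>x\<in>set xs. f x \<noteq> 0 \<longrightarrow> g x \<in> A"
  shows "prod_list (map f xs) = 0"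
proof (rule ccontr)
  assume "prod_list (map f xs) \<noteq> 0"
  then have "\<forall>x\<in>set xs. f x \<noteq> 0" by (auto simp: prod_list_zero_iff)
  then have "set (map g xs) \<subseteq> A" using assms(4) by auto
  then have "card (set (map g xs)) \<le> card A" using assms(1) card_mono by blast
  moreover have "card (set (map g xs)) = length xs" using distinct_card[OF assms(3)] by simp
  ultimately show False using assms(2) by simp
qed

lemma distinct_remove_at: "distinct (map f ks) \<Longrightarrow> distinct (map f (remove_at j ks))"
proof -
  assume d: "distinct (map f ks)"
  have e: "map f (remove_at j ks) = take j (map f ks) @ drop (Suc j) (map f ks)"
    unfolding remove_at_def by (simp add: take_map drop_map)
  have "set (take j (map f ks)) \<inter> set (drop (Suc j) (map f ks)) = {}"
    using set_take_disj_set_drop_if_distinct[OF d, of j "Suc j"] by simp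
  then show ?thesis unfolding e using d by (simp add: distinct_take distinct_drop)
qed

lemma distinct_ins: "distinct (map f (take i l @ z # drop i l)) = distinct (map f (z # l))"
proof (rule mset_eq_imp_distinct_iff)
  have m: "mset l = mset (take i l) + mset (drop i l)"
    using mset_append[of "take i l" "drop i l"] by simp
  have "mset (take i l @ z # drop i l) = mset (z # l)"
    by (simp add: m)
  then show "mset (map f (take i l @ z # drop i l)) = mset (map f (z # l))"
    by (simp only: mset_map)
qed

lemma vanish_gen:
  fixes n off :: nat
  assumes xs: "xs \<in> tdom {off+1..off+2*n} 5"
    and da: "distinct (map (\<lambda>x. ab (x - off)) xs)" and ds: "distinct (map (\<lambda>x. sb n (x - off)) xs)"
    and off: "off = 0 \<or> off = 2*n"
    and w: "w \<in> Wset n"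
  shows "w xs = 0"
proof -
  have len: "length xs = 5" and sub: "set xs \<subseteq> {off+1..off+2*n}" using xs unfolding tdom_def by auto
  obtain u where u: "u \<in> Uset n" and wu: "w = tpow u \<or> w = tpow (piv n u)"
    using w unfolding Wset_def by auto
  obtain c A K where A: "A \<subseteq> {1..n}" "card A \<le> 4" and K: "K \<subseteq> {1..n}" "card K \<le> 2"
    and ud: "u = vcat n (asum A) (\<lambda>p. c * asum K p)"
    using Uset_cases[OF u] by blast
  have fA: "finite A" using A finite_subset by blast
  have fK: "finite K" using K finite_subset by blast
  show ?thesis
  proof (cases "off = 0")
    case True
    show ?thesis using wu
    proof
      assume "w = tpow u"
      have "\<forall>x\<in>set xs. u x \<noteq> 0 \<longrightarrow> ab (x - off) \<in> A"
      proof (intro ballI impI)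
        fix x assume "x \<in> set xs" "u x \<noteq> 0"
        then have "x \<le> 2*n" "asum A x \<noteq> 0" using sub True ud vcat_def by auto
        then show "ab (x - off) \<in> A" using asum_nz[OF A(1)] True by auto
      qed
      then have "prod_list (map u xs) = 0"
        using pigeon[OF fA _ da, of u] A len by simp
      then show ?thesis using \<open>w = tpow u\<close> tpow_def by simp
    next
      assume "w = tpow (piv n u)"
      have "\<forall>x\<in>set xs. piv n u x \<noteq> 0 \<longrightarrow> sb n (x - off) \<in> K"
      proof (intro ballI impI)
        fix x assume x: "x \<in> set xs" "piv n u x \<noteq> 0"
        then have x1: "1 \<le> x" "x \<le> 2*n" using sub True by auto
        have "piv n u x = c * asum K (if x < 2*n then x+1 else 1)"
          using x1 unfolding piv_def ud vcat_def by auto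
        then have "asum K (if x < 2*n then x+1 else 1) \<noteq> 0" using x(2) by auto
        then show "sb n (x - off) \<in> K" using asum_nz[OF K(1)] True unfolding sb_def by auto
      qed
      then have "prod_list (map (piv n u) xs) = 0"
        using pigeon[OF fK _ ds, of "piv n u"] K len by simp
      then show ?thesis using \<open>w = tpow (piv n u)\<close> tpow_def by simp
    qed
  next
    case False
    then have oo: "off = 2*n" using off by simp
    show ?thesis using wu
    proof
      assume "w = tpow u"
      have "\<forall>x\<in>set xs. u x \<noteq> 0 \<longrightarrow> ab (x - off) \<in> K"
      proof (intro ballI impI)
        fix x assume "x \<in> set xs" "u x \<noteq> 0"
        then have "x > 2*n" "c * asum K (x - 2*n) \<noteq> 0" using sub oo ud vcat_def by auto
        then show "ab (x - off) \<in> K" using asum_nz[OF K(1)] oo by auto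
      qed
      then have "prod_list (map u xs) = 0"
        using pigeon[OF fK _ da, of u] K len by simp
      then show ?thesis using \<open>w = tpow u\<close> tpow_def by simp
    next
      assume "w = tpow (piv n u)"
      have "\<forall>x\<in>set xs. piv n u x \<noteq> 0 \<longrightarrow> sb n (x - off) \<in> A"
      proof (intro ballI impI)
        fix x assume x: "x \<in> set xs" "piv n u x \<noteq> 0"
        then have x1: "2*n < x" "x \<le> 4*n" using sub oo by auto
        have "piv n u x = asum A (if x - 2*n < 2*n then x - 2*n + 1 else 1)"
          using x1 unfolding piv_def ud vcat_def by auto
        then have "asum A (if x - 2*n < 2*n then x - 2*n+1 else 1) \<noteq> 0" using x(2) by auto
        then show "sb n (x - off) \<in> A" using asum_nz[OF A(1)] oo unfolding sb_def by auto
      qed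
      then have "prod_list (map (piv n u) xs) = 0"
        using pigeon[OF fA _ ds, of "piv n u"] A len by simp
      then show ?thesis using \<open>w = tpow (piv n u)\<close> tpow_def by simp
    qed
  qed
qed

lemma blocks_adj:
  assumes "1 \<le> r" "r < 2*n"
  shows "ab r \<in> {ab r, sb n (r+1)} \<and> sb n r \<in> {ab r, sb n (r+1)} \<and>
         ab (r+1) \<in> {ab r, sb n (r+1)} \<and> sb n (r+1) \<in> {ab r, sb n (r+1)}"
proof (cases "even r")
  case True
  then obtain m where m: "r = 2*m" by blast
  have "r + 1 < 2*n" using assms m by simp
  then show ?thesis using assms m unfolding ab_def sb_def by simp
next
  case False
  then obtain m where m: "r = 2*m+1" using oddE by blast
  show ?thesis using assms m unfolding ab_def sb_def by simp
qed

lemma odd_pos: "1 \<le> j \<Longrightarrow> j \<le> n \<Longrightarrow> ab (2*j-1) = j \<and> sb n (2*j-1) = j"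
  unfolding ab_def sb_def by auto

lemma exists_list:
  fixes S :: "nat set"
  assumes "finite S" "5 \<le> card S"
  shows "\<exists>L. distinct L \<and> length L = 5 \<and> set L \<subseteq> S"
proof -
  obtain T where T: "T \<subseteq> S" "card T = 5" using obtain_subset_with_card_n[OF assms(2)] by blast
  have fT: "finite T" using T assms(1) finite_subset by blast
  show ?thesis
    by (rule exI[of _ "sorted_list_of_set T"]) (use T fT in auto)
qed

definition Gset :: "nat \<Rightarrow> nat \<Rightarrow> nat list set" where
  "Gset n off = {ks \<in> tdom {off+1..off+2*n} 6. distinct (map (\<lambda>x. ab (x - off)) ks) \<and>
                   distinct (map (\<lambda>x. sb n (x - off)) ks)}"

lemma step_gen:
  assumes n: "n \<ge> 7" and i: "i < 6" and x: "off + 1 \<le> x" "x < off + 2*n"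
  shows "\<exists>ks\<in>Gset n off. ks ! i = x \<and> ks[i := x+1] \<in> Gset n off"
proof -
  define r where "r = x - off"
  have r: "1 \<le> r" "r < 2*n" using x r_def by auto
  define B where "B = {ab r, sb n (r+1)}"
  have cB: "card B \<le> 2" unfolding B_def by (simp add: card_insert_le_m1)
  have "card {1..n} - card B \<le> card ({1..n} - B)"
    using diff_card_le_card_Diff[of B "{1..n::nat}"] B_def by simp
  then have "5 \<le> card ({1..n} - B)" using cB n by simp
  then obtain L where L: "distinct L" "length L = 5" "set L \<subseteq> {1..n} - B"
    using exists_list[of "{1..n} - B"] by auto
  define L' where "L' = map (\<lambda>j. off + 2*j - 1) L"
  have mab: "map (\<lambda>x. ab (x - off)) L' = L"
    unfolding L'_def map_map o_def
  proof (rule map_idI)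
    fix j assume "j \<in> set L"
    then have j: "1 \<le> j" "j \<le> n" using L(3) by auto
    then have "off + 2*j - 1 - off = 2*j - 1" by simp
    then show "ab (off + 2*j - 1 - off) = j" using odd_pos[OF j] by simp
  qed
  have msb: "map (\<lambda>x. sb n (x - off)) L' = L"
    unfolding L'_def map_map o_def
  proof (rule map_idI)
    fix j assume "j \<in> set L"
    then have j: "1 \<le> j" "j \<le> n" using L(3) by auto
    then have "off + 2*j - 1 - off = 2*j - 1" by simp
    then show "sb n (off + 2*j - 1 - off) = j" using odd_pos[OF j] by simp
  qed
  have L'I: "set L' \<subseteq> {off+1..off+2*n}"
  proof
    fix y assume "y \<in> set L'"
    then obtain j where "j \<in> set L" "y = off + 2*j - 1" unfolding L'_def by auto
    moreover then have "1 \<le> j" "j \<le> n" using L(3) by auto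
    ultimately show "y \<in> {off+1..off+2*n}" by auto
  qed
  have lenL': "length L' = 5" using L(2) L'_def by simp
  have inG: "take i L' @ z # drop i L' \<in> Gset n off"
    if z: "z \<in> {off+1..off+2*n}" "ab (z - off) \<in> B" "sb n (z - off) \<in> B" for z
  proof -
    have "set (take i L' @ z # drop i L') \<subseteq> {off+1..off+2*n}"
      using L'I z(1) set_take_subset[of i L'] set_drop_subset[of i L'] by auto
    moreover have "length (take i L' @ z # drop i L') = 6" using lenL' i by simp
    moreover have "distinct (map (\<lambda>x. ab (x - off)) (take i L' @ z # drop i L'))"
      unfolding distinct_ins using mab L z(2) by (simp del: map_map) (metis Diff_iff subsetD)
    moreover have "distinct (map (\<lambda>x. sb n (x - off)) (take i L' @ z # drop i L'))"
      unfolding distinct_ins using msb L z(3) by (simp del: map_map) (metis Diff_iff subsetD)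
    ultimately show ?thesis unfolding Gset_def tdom_def by auto
  qed
  have bx: "ab (x - off) \<in> B" "sb n (x - off) \<in> B" "ab (x + 1 - off) \<in> B" "sb n (x + 1 - off) \<in> B"
    using blocks_adj[OF r] unfolding B_def r_def using x by (auto simp: Suc_diff_le)
  have g1: "take i L' @ x # drop i L' \<in> Gset n off" using inG[of x] x bx by auto
  have g2: "take i L' @ (x+1) # drop i L' \<in> Gset n off" using inG[of "x+1"] x bx by auto
  have e1: "(take i L' @ x # drop i L') ! i = x" using lenL' i by (simp add: nth_append)
  have e2: "(take i L' @ x # drop i L')[i := x+1] = take i L' @ (x+1) # drop i L'"
    using lenL' i by (simp add: list_update_append)
  show ?thesis using g1 g2 e1 e2 by metis
qed

lemma final_gen:
  assumes n: "n \<ge> 7" and off: "off = 0 \<or> off = 2*n"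
  shows "only_decomposable ones_tensor (Wset n) {off+1..off+2*n} 6"
proof (rule abstract_main)
  show "off + 1 \<le> off + 2*n" using n by simp
  show "Gset n off \<subseteq> tdom {off + 1..off + 2 * n} 6" unfolding Gset_def by auto
  show "Gset n off \<noteq> {}" using step_gen[OF n, of 0 off "off+1"] n by auto
  show "\<And>i x. i < 6 \<Longrightarrow> off + 1 \<le> x \<Longrightarrow> x < off + 2 * n \<Longrightarrow>
          \<exists>ks\<in>Gset n off. ks ! i = x \<and> ks[i := x + 1] \<in> Gset n off"
    using step_gen[OF n] by blast
  show "w (remove_at j ks) = 0" if "ks \<in> Gset n off" "j < 6" "w \<in> Wset n" for ks j w
  proof (rule vanish_gen[OF _ _ _ off that(3)])
    show "remove_at j ks \<in> tdom {off + 1..off + 2 * n} 5"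
      using that(1,2) remove_at_tdom unfolding Gset_def by blast
    show "distinct (map (\<lambda>x. ab (x - off)) (remove_at j ks))"
      using that(1) distinct_remove_at unfolding Gset_def by blast
    show "distinct (map (\<lambda>x. sb n (x - off)) (remove_at j ks))"
      using that(1) distinct_remove_at unfolding Gset_def by blast
  qed
qed

theorem proposition5p4:
  fixes n :: nat
  assumes "n \<ge> 7"
  shows "only_decomposable ones_tensor (Wset n) {1..2*n} 6 \<and>
         only_decomposable ones_tensor (Wset n) {2*n+1..4*n} 6"
proof
  show "only_decomposable ones_tensor (Wset n) {1..2*n} 6"
    using final_gen[OF assms, of 0] by simp
  have "{2*n+1..2*n+2*n} = {2*n+1..4*n}" by simp
  then show "only_decomposable ones_tensor (Wset n) {2*n+1..4*n} 6"
    using final_gen[OF assms, of "2*n"] by simp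
qed

end
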